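(* For every $n\ge 6$ there exist two non-isomorphic graphs $G,H$ on $n$ vertices and a set $\mathcal{F}$ consisting of a single graph of constant order such that, for every number of rounds, $1$-WL does not distinguish $G$ and $H$, while $1$-WL$_{\mathcal{F}}$ distinguishes $G$ and $H$ after a single round.
   Context: Graphs are finite, simple, undirected and unlabeled. $\mathsf{RELABEL}$ is a fixed injective map, shared by all graphs, from pairs (colour, finite multiset of colours) to natural numbers. $1$-WL: $C^1_0$ is constant; $C^1_t(v)=\mathsf{RELABEL}(C^1_{t-1}(v),\{\!\{C^1_{t-1}(u):u\in N(v)\}\!\})$. $1$-WL$_{\mathcal{F}}$: same update, but initial colour $C^{1,\mathcal{F}}_0(v)=(\ell_F(v))_{F\in\mathcal{F}}$ where $\ell_F(v)=1$ if $v$ lies in some vertex set $X$ whose induced subgraph $G[X]$ is isomorphic to $F$ and $0$ otherwise. An algorithm distinguishes $G$ and $H$ after round $t$ if for some round $s\le t$ there is a colour $c$ such that the number of vertices of colour $c$ at round $s$ differs between $G$ and $H$ (colourings computed with the shared $\mathsf{RELABEL}$). *)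

theory Defs
  imports Main "HOL-Library.Multiset"
begin

type_synonym graph = "nat set \<times> nat set set"

definition verts :: "graph \<Rightarrow> nat set" where "verts G = fst G"
definition edges :: "graph \<Rightarrow> nat set set" where "edges G = snd G"

definition simple_graph :: "graph \<Rightarrow> bool" where
  "simple_graph G \<longleftrightarrow> finite (verts G) \<and>
     (\<forall>e\<in>edges G. \<exists>u v. u \<noteq> v \<and> u \<in> verts G \<and> v \<in> verts G \<and> e = {u, v})"

definition nbrs :: "graph \<Rightarrow> nat \<Rightarrow> nat set" where
  "nbrs G v = {u \<in> verts G. {u, v} \<in> edges G}"

definition graph_iso :: "graph \<Rightarrow> graph \<Rightarrow> bool" where
  "graph_iso G H \<longleftrightarrow> (\<exists>f. bij_betw f (verts G) (verts H) \<and>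
     (\<forall>x\<in>verts G. \<forall>y\<in>verts G. {x, y} \<in> edges G \<longleftrightarrow> {f x, f y} \<in> edges H))"

definition in_induced_copy :: "graph \<Rightarrow> graph \<Rightarrow> nat \<Rightarrow> bool" where
  "in_induced_copy F G v \<longleftrightarrow> (\<exists>X. X \<subseteq> verts G \<and> v \<in> X \<and>
     (\<exists>f. bij_betw f X (verts F) \<and>
        (\<forall>x\<in>X. \<forall>y\<in>X. {x, y} \<in> edges G \<longleftrightarrow> {f x, f y} \<in> edges F)))"

text \<open>Colours: initial colours are tuples (lists) of bits; later colours are natural
  numbers produced by RELABEL.\<close>
datatype colour = Tup "bool list" | Num nat

fun wl_col :: "(colour \<times> colour multiset \<Rightarrow> nat) \<Rightarrow> (graph \<Rightarrow> nat \<Rightarrow> colour)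
                 \<Rightarrow> graph \<Rightarrow> nat \<Rightarrow> nat \<Rightarrow> colour" where
  "wl_col R init G 0 v = init G v"
| "wl_col R init G (Suc t) v =
     Num (R (wl_col R init G t v, image_mset (wl_col R init G t) (mset_set (nbrs G v))))"

definition init_plain :: "graph \<Rightarrow> nat \<Rightarrow> colour" where
  "init_plain G v = Tup []"

definition init_F :: "graph list \<Rightarrow> graph \<Rightarrow> nat \<Rightarrow> colour" where
  "init_F Fs G v = Tup (map (\<lambda>F. in_induced_copy F G v) Fs)"

definition distinguishes ::
  "(colour \<times> colour multiset \<Rightarrow> nat) \<Rightarrow> (graph \<Rightarrow> nat \<Rightarrow> colour) \<Rightarrow> graph \<Rightarrow> graph \<Rightarrow> nat \<Rightarrow> bool" where
  "distinguishes R init G H t \<longleftrightarrow> (\<exists>s\<le>t. \<exists>c.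
     card {v \<in> verts G. wl_col R init G s v = c} \<noteq> card {v \<in> verts H. wl_col R init H s v = c})"

end

theory Submission
  imports Defs
begin

definition mkG :: "nat \<Rightarrow> (nat \<Rightarrow> nat \<Rightarrow> bool) \<Rightarrow> graph" where
  "mkG n A = ({..<n}, {{x, y} | x y. x < n \<and> y < n \<and> A x y})"

definition cyc :: "nat \<Rightarrow> nat \<Rightarrow> nat \<Rightarrow> nat \<Rightarrow> bool" where
  "cyc a m x y \<longleftrightarrow> a \<le> x \<and> x < a + m \<and> a \<le> y \<and> y < a + m \<and>
     (y = x + 1 \<or> x = y + 1 \<or> (x = a \<and> y = a + m - 1) \<or> (y = a \<and> x = a + m - 1))"

definition adjH :: "nat \<Rightarrow> nat \<Rightarrow> nat \<Rightarrow> bool" where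
  "adjH n x y \<longleftrightarrow> cyc 0 3 x y \<or> cyc 3 (n - 3) x y"

lemma verts_mkG[simp]: "verts (mkG n A) = {..<n}"
  by (simp add: verts_def mkG_def)

lemma edge_iff:
  assumes "\<And>x y. A x y \<Longrightarrow> A y x"
  shows "{a, b} \<in> edges (mkG n A) \<longleftrightarrow> a < n \<and> b < n \<and> A a b"
  using assms by (auto simp: edges_def mkG_def doubleton_eq_iff)

lemma nbrs_mkG:
  assumes "\<And>x y. A x y \<Longrightarrow> A y x"
  shows "nbrs (mkG n A) v = {u. u < n \<and> v < n \<and> A u v}"
  unfolding nbrs_def using edge_iff[OF assms] by auto

lemma simple_mkG:
  assumes "\<And>x. \<not> A x x"
  shows "simple_graph (mkG n A)"
  unfolding simple_graph_def using assms
  by (auto simp: edges_def verts_def mkG_def; metis)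

lemma cyc_sym: "cyc a m x y \<Longrightarrow> cyc a m y x"
  unfolding cyc_def by auto

lemma cyc_irr: "m \<ge> 2 \<Longrightarrow> \<not> cyc a m x x"
  unfolding cyc_def by auto

lemma adjH_sym: "adjH n x y \<Longrightarrow> adjH n y x"
  unfolding adjH_def using cyc_sym by blast

lemma adjH_irr: "n \<ge> 6 \<Longrightarrow> \<not> adjH n x x"
  unfolding adjH_def using cyc_irr[of 3] cyc_irr[of "n-3"] by auto

lemma cyc_nbrs:
  assumes "m \<ge> 3" "a \<le> v" "v < a + m"
  shows "{u. cyc a m u v} = {if v = a + m - 1 then a else Suc v, if v = a then a + m - 1 else v - 1}"
  using assms unfolding cyc_def by (auto split: if_splits)

lemma cyc_card:
  assumes "m \<ge> 3" "a \<le> v" "v < a + m"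
  shows "card {u. cyc a m u v} = 2"
  unfolding cyc_nbrs[OF assms] using assms by (auto split: if_splits)

lemma no_tri:
  assumes "n \<ge> 4" "cyc 0 n x y" "cyc 0 n y z" "cyc 0 n x z" "x \<noteq> y" "y \<noteq> z" "x \<noteq> z"
  shows False
  using assms unfolding cyc_def by arith

fun cc :: "(colour \<times> colour multiset \<Rightarrow> nat) \<Rightarrow> nat \<Rightarrow> colour" where
  "cc R 0 = Tup []"
| "cc R (Suc t) = Num (R (cc R t, replicate_mset 2 (cc R t)))"

lemma wl_const:
  assumes "finite (verts G)" "\<And>v. v \<in> verts G \<Longrightarrow> card (nbrs G v) = 2"
  shows "v \<in> verts G \<Longrightarrow> wl_col R init_plain G t v = cc R t"
proof (induction t arbitrary: v)
  case 0
  then show ?case by (simp add: init_plain_def)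
next
  case (Suc t)
  have sub: "nbrs G v \<subseteq> verts G" unfolding nbrs_def by auto
  have fin: "finite (nbrs G v)" using sub assms(1) finite_subset by blast
  have "image_mset (wl_col R init_plain G t) (mset_set (nbrs G v))
        = image_mset (\<lambda>_. cc R t) (mset_set (nbrs G v))"
    by (rule image_mset_cong) (use Suc.IH sub fin in auto)
  also have "\<dots> = replicate_mset 2 (cc R t)"
    by (simp add: image_mset_const_eq assms(2)[OF Suc.prems] fin)
  finally show ?case using Suc by simp
qed

lemma no_dist:
  assumes "finite (verts G)" "\<And>v. v \<in> verts G \<Longrightarrow> card (nbrs G v) = 2"
    and "finite (verts H)" "\<And>v. v \<in> verts H \<Longrightarrow> card (nbrs H v) = 2"
    and "card (verts G) = card (verts H)"
  shows "\<not> distinguishes R init_plain G H t"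
proof -
  have "card {v \<in> verts G. wl_col R init_plain G s v = c} = card {v \<in> verts H. wl_col R init_plain H s v = c}" for s c
  proof -
    have "{v \<in> verts G. wl_col R init_plain G s v = c} = (if c = cc R s then verts G else {})"
      using wl_const[OF assms(1,2)] by auto
    moreover have "{v \<in> verts H. wl_col R init_plain H s v = c} = (if c = cc R s then verts H else {})"
      using wl_const[OF assms(3,4)] by auto
    ultimately show ?thesis using assms(5) by simp
  qed
  then show ?thesis unfolding distinguishes_def by auto
qed


lemma nbrs_cyc: "nbrs (mkG n (cyc a m)) v = {u. u < n \<and> v < n \<and> cyc a m u v}"
  by (rule nbrs_mkG) (rule cyc_sym)
lemma nbrs_adjH: "nbrs (mkG n (adjH k)) v = {u. u < n \<and> v < n \<and> adjH k u v}"
  by (rule nbrs_mkG) (rule adjH_sym)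
lemma edge_cyc: "{x, y} \<in> edges (mkG n (cyc a m)) \<longleftrightarrow> x < n \<and> y < n \<and> cyc a m x y"
  by (rule edge_iff) (rule cyc_sym)
lemma edge_adjH: "{x, y} \<in> edges (mkG n (adjH k)) \<longleftrightarrow> x < n \<and> y < n \<and> adjH k x y"
  by (rule edge_iff) (rule adjH_sym)

lemma G_deg: "n \<ge> 6 \<Longrightarrow> v \<in> verts (mkG n (cyc 0 n)) \<Longrightarrow> card (nbrs (mkG n (cyc 0 n)) v) = 2"
proof -
  assume n: "n \<ge> 6" and v: "v \<in> verts (mkG n (cyc 0 n))"
  have "nbrs (mkG n (cyc 0 n)) v = {u. cyc 0 n u v}"
    unfolding nbrs_cyc using v by (auto simp: cyc_def)
  then show ?thesis using cyc_card[of n 0 v] n v by simp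
qed

lemma H_deg: "n \<ge> 6 \<Longrightarrow> v \<in> verts (mkG n (adjH n)) \<Longrightarrow> card (nbrs (mkG n (adjH n)) v) = 2"
proof -
  assume n: "n \<ge> 6" and v: "v \<in> verts (mkG n (adjH n))"
  show ?thesis
  proof (cases "v < 3")
    case True
    have "nbrs (mkG n (adjH n)) v = {u. cyc 0 3 u v}"
      unfolding nbrs_adjH using v True n by (auto simp: cyc_def adjH_def)
    then show ?thesis using cyc_card[of 3 0 v] True by simp
  next
    case False
    have "nbrs (mkG n (adjH n)) v = {u. cyc 3 (n-3) u v}"
      unfolding nbrs_adjH using v False n by (auto simp: cyc_def adjH_def)
    then show ?thesis using cyc_card[of "n-3" 3 v] False n v by simp
  qed
qed

lemma H_tri: "n \<ge> 6 \<Longrightarrow> x < 3 \<Longrightarrow> y < 3 \<Longrightarrow> {x, y} \<in> edges (mkG n (adjH n)) \<longleftrightarrow> {x, y} \<in> edges (mkG 3 (cyc 0 3))"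
  unfolding edge_adjH edge_cyc by (auto simp: adjH_def cyc_def)

lemma G_no_copy:
  assumes n: "n \<ge> 6"
  shows "\<not> in_induced_copy (mkG 3 (cyc 0 3)) (mkG n (cyc 0 n)) v"
proof
  assume "in_induced_copy (mkG 3 (cyc 0 3)) (mkG n (cyc 0 n)) v"
  then obtain X f where X: "X \<subseteq> {..<n}" and b: "bij_betw f X {..<3}"
    and e: "\<forall>x\<in>X. \<forall>y\<in>X. {x, y} \<in> edges (mkG n (cyc 0 n)) \<longleftrightarrow> {f x, f y} \<in> edges (mkG 3 (cyc 0 3))"
    unfolding in_induced_copy_def by auto
  define g where "g = inv_into X f"
  have gi: "g i \<in> X" "f (g i) = i" if "i < 3" for i
    using b that unfolding g_def bij_betw_def by (auto simp: inv_into_into f_inv_into_f)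
  have adj: "cyc 0 n (g i) (g j)" if "i < 3" "j < 3" "cyc 0 3 i j" for i j
  proof -
    have "g i \<in> X" "g j \<in> X" using gi that by auto
    then have "g i < n" "g j < n" using X by auto
    then show ?thesis using e[rule_format, OF \<open>g i \<in> X\<close> \<open>g j \<in> X\<close>] gi that
      unfolding edge_cyc by auto
  qed
  have d: "g i \<noteq> g j" if "i < 3" "j < 3" "i \<noteq> j" for i j
    using gi[OF that(1)] gi[OF that(2)] that by metis
  have c01: "cyc 0 3 0 1" and c12: "cyc 0 3 1 2" and c02: "cyc 0 3 0 2" by (simp_all add: cyc_def)
  have n4: "n \<ge> 4" using n by simp
  show False
    by (rule no_tri[OF n4 adj[OF _ _ c01] adj[OF _ _ c12] adj[OF _ _ c02] d d d]) simp_all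
qed

lemma not_iso:
  assumes n: "n \<ge> 6"
  shows "\<not> graph_iso (mkG n (cyc 0 n)) (mkG n (adjH n))"
proof
  assume "graph_iso (mkG n (cyc 0 n)) (mkG n (adjH n))"
  then obtain f where b: "bij_betw f {..<n} {..<n}"
    and e: "\<forall>x\<in>{..<n}. \<forall>y\<in>{..<n}. {x, y} \<in> edges (mkG n (cyc 0 n)) \<longleftrightarrow> {f x, f y} \<in> edges (mkG n (adjH n))"
    unfolding graph_iso_def by auto
  define g where "g = inv_into {..<n} f"
  have gi: "g i \<in> {..<n}" "f (g i) = i" if "i < n" for i
    using b that unfolding g_def bij_betw_def by (metis inv_into_into lessThan_iff, metis f_inv_into_f lessThan_iff)
  have adj: "cyc 0 n (g i) (g j)" if "i < 3" "j < 3" "cyc 0 3 i j" for i j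
  proof -
    have i: "i < n" "j < n" using that n by simp_all
    have "adjH n i j" using that unfolding adjH_def by simp
    then have "{f (g i), f (g j)} \<in> edges (mkG n (adjH n))"
      using gi(2)[OF i(1)] gi(2)[OF i(2)] i unfolding edge_adjH by simp
    then have "{g i, g j} \<in> edges (mkG n (cyc 0 n))"
      using e gi(1)[OF i(1)] gi(1)[OF i(2)] by blast
    then show ?thesis unfolding edge_cyc by simp
  qed
  have d: "g i \<noteq> g j" if "i < 3" "j < 3" "i \<noteq> j" for i j
  proof -
    have i: "i < n" "j < n" using that n by simp_all
    show ?thesis using gi(2)[OF i(1)] gi(2)[OF i(2)] that(3) by metis
  qed
  have c01: "cyc 0 3 0 1" and c12: "cyc 0 3 1 2" and c02: "cyc 0 3 0 2" by (simp_all add: cyc_def)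
  have n4: "n \<ge> 4" using n by simp
  show False
    by (rule no_tri[OF n4 adj[OF _ _ c01] adj[OF _ _ c12] adj[OF _ _ c02] d d d]) simp_all
qed

lemma H_copy:
  assumes n: "n \<ge> 6"
  shows "in_induced_copy (mkG 3 (cyc 0 3)) (mkG n (adjH n)) 0"
  unfolding in_induced_copy_def
proof (intro exI conjI)
  show "{..<3} \<subseteq> verts (mkG n (adjH n))" using n by auto
  show "(0::nat) \<in> {..<3}" by simp
  show "bij_betw id {..<3::nat} (verts (mkG 3 (cyc 0 3)))" by simp
  show "\<forall>x\<in>{..<3}. \<forall>y\<in>{..<3}. {x, y} \<in> edges (mkG n (adjH n)) \<longleftrightarrow> {id x, id y} \<in> edges (mkG 3 (cyc 0 3))"
    using H_tri[OF n] by simp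
qed

theorem proposition2:
  fixes RELABEL :: "colour \<times> colour multiset \<Rightarrow> nat"
  assumes "inj RELABEL"
  shows "\<exists>k::nat. \<forall>n\<ge>6. \<exists>G H F.
    simple_graph G \<and> simple_graph H \<and> simple_graph F \<and>
    card (verts G) = n \<and> card (verts H) = n \<and> \<not> graph_iso G H \<and>
    card (verts F) = k \<and>
    (\<forall>t. \<not> distinguishes RELABEL init_plain G H t) \<and>
    distinguishes RELABEL (init_F [F]) G H 1"
proof (intro exI allI impI)
  fix n :: nat assume n: "n \<ge> 6"
  let ?G = "mkG n (cyc 0 n)" and ?H = "mkG n (adjH n)" and ?F = "mkG 3 (cyc 0 3)"
  have "distinguishes RELABEL (init_F [?F]) ?G ?H 1"
    unfolding distinguishes_def
  proof (intro exI conjI)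
    show "(0::nat) \<le> 1" by simp
    have "{v \<in> verts ?G. wl_col RELABEL (init_F [?F]) ?G 0 v = Tup [True]} = {}"
      using G_no_copy[OF n] by (auto simp: init_F_def)
    moreover have "0 \<in> {v \<in> verts ?H. wl_col RELABEL (init_F [?F]) ?H 0 v = Tup [True]}"
      using H_copy[OF n] n by (auto simp: init_F_def)
    moreover have "finite {v \<in> verts ?H. wl_col RELABEL (init_F [?F]) ?H 0 v = Tup [True]}"
      by (rule finite_subset[of _ "verts ?H"]) auto
    ultimately show "card {v \<in> verts ?G. wl_col RELABEL (init_F [?F]) ?G 0 v = Tup [True]}
      \<noteq> card {v \<in> verts ?H. wl_col RELABEL (init_F [?F]) ?H 0 v = Tup [True]}"
    proof -
      assume a: "{v \<in> verts ?G. wl_col RELABEL (init_F [?F]) ?G 0 v = Tup [True]} = {}"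
        and b: "0 \<in> {v \<in> verts ?H. wl_col RELABEL (init_F [?F]) ?H 0 v = Tup [True]}"
        and c: "finite {v \<in> verts ?H. wl_col RELABEL (init_F [?F]) ?H 0 v = Tup [True]}"
      have "card {v \<in> verts ?H. wl_col RELABEL (init_F [?F]) ?H 0 v = Tup [True]} > 0"
        unfolding card_gt_0_iff using c b by (intro conjI) blast+
      then show ?thesis unfolding a card.empty by (rule less_not_refl3)
    qed
  qed
  moreover have cG: "card (verts ?G) = n" "card (verts ?H) = n" by simp_all
  have cF: "card (verts ?F) = 3" by simp
  moreover have "simple_graph ?G" by (rule simple_mkG) (rule cyc_irr, use n in simp)
  moreover have "simple_graph ?H" by (rule simple_mkG) (rule adjH_irr[OF n])
  moreover have "simple_graph ?F" by (rule simple_mkG) (rule cyc_irr, simp)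
  moreover have "\<forall>t. \<not> distinguishes RELABEL init_plain ?G ?H t"
    using no_dist[of ?G ?H RELABEL] G_deg[OF n] H_deg[OF n] by simp
  ultimately show "simple_graph ?G \<and> simple_graph ?H \<and> simple_graph ?F \<and>
    card (verts ?G) = n \<and> card (verts ?H) = n \<and> \<not> graph_iso ?G ?H \<and>
    card (verts ?F) = 3 \<and>
    (\<forall>t. \<not> distinguishes RELABEL init_plain ?G ?H t) \<and>
    distinguishes RELABEL (init_F [?F]) ?G ?H 1"
    using not_iso[OF n] cG cF by blast
qed

end
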